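(* Let $d\in\mathbb{N}$, $\mathsf{H}_{\mathbb{R}}=\mathbb{R}^d$ with a strongly continuous orthogonal group $(U_t)_{t\in\mathbb{R}}$, $\mathsf{M}=\Gamma_q(\mathsf{H}_{\mathbb{R}},U_t)$. Let $\{e_i\}_{1\le i\le d}$ and $\{f_i\}_{1\le i\le d}$ be two linearly independent sets in $\mathsf{H}=\mathbb{C}^d$ such that $f_j=\sum_{k=1}^d x_{jk}e_k$ for some $x_{jk}\in\mathbb{C}$, $j=1,\dots,d$. Let $A_i=W(e_i)$ and $C_i=W(f_i)$. Then a (normalized) dual system for $(A_1,\dots,A_d)$ exists if and only if one for $(C_1,\dots,C_d)$ exists.
   Context: Fix $q\in(-1,1)$; inner products are linear in the second variable. $\mathsf{H}$ is the complexification of $\mathsf{H}_{\mathbb{R}}$, $A$ the generator of $(U_t)$ ($U_t=A^{it}$), $\langle\xi,\eta\rangle_U=\langle\xi,\frac{2A}{1+A}\eta\rangle$. $\mathcal{F}_q(\mathsf{H}_U)$ is the $q$-Fock space over $(\mathsf{H},\langle\cdot,\cdot\rangle_U)$ with vacuum $\Omega$, $\mathcal{F}_q(\mathsf{H}_U)_{\mathrm{alg}}$ the span of finite tensors; $l^*(\xi)$ the creation operator, $s(\xi)=l^*(\xi)+l^*(\xi)^*$, $\Gamma_q(\mathsf{H}_{\mathbb{R}},U_t)=\{s(\xi):\xi\in\mathsf{H}_{\mathbb{R}}\}''$, $\varphi=\langle\Omega,\cdot\,\Omega\rangle$. For $\xi\in\mathcal{F}_q(\mathsf{H}_U)_{\mathrm{alg}}$,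 $W(\xi)\in\mathsf{M}$ is the unique element with $W(\xi)\Omega=\xi$. A (normalized) dual system for $(A_1,\dots,A_d)$ (where $A_i=W(e_i)$) is a tuple $(D_1,\dots,D_d)$ of unbounded operators on $\mathcal{F}_q(\mathsf{H}_U)$ whose domains contain $\mathcal{F}_q(\mathsf{H}_U)_{\mathrm{alg}}$ and whose adjoints contain $\Omega$ in their domains, such that $D_i\Omega=0$ and $[D_i,A_j]=\langle\bar e_j,e_i\rangle_U P_{\mathbb{C}\Omega}$ for all $i,j$, with $\bar\xi$ the complex conjugate in $\mathbb{C}^d$ and $P_{\mathbb{C}\Omega}$ the projection onto $\mathbb{C}\Omega$. *)

theory Defs
  imports "HOL-Analysis.Analysis"
begin

definition cinner :: "complex^'d \<Rightarrow> complex^'d \<Rightarrow> complex" where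
  "cinner x y = (\<Sum>k\<in>UNIV. cnj (x$k) * y$k)"

definition conjv :: "complex^'d \<Rightarrow> complex^'d" where
  "conjv x = (\<chi> k. cnj (x$k))"
definition rev_part :: "complex^'d \<Rightarrow> complex^'d" where
  "rev_part x = (\<chi> k. complex_of_real (Re (x$k)))"
definition imv :: "complex^'d \<Rightarrow> complex^'d" where
  "imv x = (\<chi> k. complex_of_real (Im (x$k)))"

definition orth_group :: "(real \<Rightarrow> real^'d \<Rightarrow> real^'d) \<Rightarrow> bool" where
  "orth_group U \<longleftrightarrow>
     (\<forall>t. linear (U t)) \<and> (\<forall>t x y. inner (U t x) (U t y) = inner x y) \<and>
     U 0 = id \<and> (\<forall>s t. U (s + t) = U s \<circ> U t) \<and>
     (\<forall>x. continuous_on UNIV (\<lambda>t. U t x))"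

definition Uc :: "(real \<Rightarrow> real^'d \<Rightarrow> real^'d) \<Rightarrow> real \<Rightarrow> complex^'d \<Rightarrow> complex^'d" where
  "Uc U t x = (\<chi> k. complex_of_real ((U t (\<chi> j. Re (x$j)))$k)
                     + \<i> * complex_of_real ((U t (\<chi> j. Im (x$j)))$k))"

text \<open>A is the (analytic) generator of U: A is a positive non-singular self-adjoint
  matrix (given by its spectral decomposition) with A^{it} = U_t (functional calculus).\<close>
definition is_generator :: "(real \<Rightarrow> real^'d \<Rightarrow> real^'d) \<Rightarrow> complex^'d^'d \<Rightarrow> bool" where
  "is_generator U A \<longleftrightarrow>
     (\<exists>(v :: 'd \<Rightarrow> complex^'d) (lam :: 'd \<Rightarrow> real).
        (\<forall>k l. cinner (v k) (v l) = (if k = l then 1 else 0)) \<and>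
        (\<forall>k. lam k > 0) \<and>
        (\<forall>y. A *v y = (\<Sum>k\<in>UNIV. (complex_of_real (lam k) * cinner (v k) y) *s v k)) \<and>
        (\<forall>t y. Uc U t y = (\<Sum>k\<in>UNIV. (cis (t * ln (lam k)) * cinner (v k) y) *s v k)))"

definition minv :: "complex^'d^'d \<Rightarrow> complex^'d^'d" where
  "minv B = (THE M. M ** B = mat 1 \<and> B ** M = mat 1)"

definition innerU :: "complex^'d^'d \<Rightarrow> complex^'d \<Rightarrow> complex^'d \<Rightarrow> complex" where
  "innerU A x y = cinner x ((A ** minv (mat 1 + A)) *v ((2::complex) *s y))"

text \<open>An element of the algebraic q-Fock space is a finitely supported coefficient
  function on words: the word [i1,...,in] stands for the elementary tensor
  delta_{i1} (x) ... (x) delta_{in} of standard basis vectors of C^d; [] stands for Omega.\<close>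
type_synonym 'd fock = "'d list \<Rightarrow> complex"

definition falg :: "'d fock \<Rightarrow> bool" where
  "falg x \<longleftrightarrow> finite {w. x w \<noteq> 0}"

definition vac :: "'d fock" where
  "vac w = (if w = [] then 1 else 0)"

definition inv_count :: "nat \<Rightarrow> (nat \<Rightarrow> nat) \<Rightarrow> nat" where
  "inv_count n p = card {(i, j). i < j \<and> j < n \<and> p j < p i}"

definition qip_word :: "real \<Rightarrow> complex^'d^'d \<Rightarrow> 'd list \<Rightarrow> 'd list \<Rightarrow> complex" where
  "qip_word q A w w' =
     (if length w = length w' then
        (\<Sum>p\<in>{p. p permutes {..<length w}}.
           complex_of_real (q ^ inv_count (length w) p) *
           (\<Prod>k<length w. innerU A (axis (w!k) 1) (axis (w'!(p k)) 1)))
      else 0)"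

definition qip :: "real \<Rightarrow> complex^'d^'d \<Rightarrow> 'd fock \<Rightarrow> 'd fock \<Rightarrow> complex" where
  "qip q A x y = (\<Sum>w\<in>{w. x w \<noteq> 0}. \<Sum>w'\<in>{w'. y w' \<noteq> 0}.
                    cnj (x w) * y w' * qip_word q A w w')"

definition qnorm :: "real \<Rightarrow> complex^'d^'d \<Rightarrow> 'd fock \<Rightarrow> real" where
  "qnorm q A x = sqrt (Re (qip q A x x))"

definition lvl1 :: "complex^'d \<Rightarrow> 'd fock" where
  "lvl1 \<xi> w = (case w of [i] \<Rightarrow> \<xi>$i | _ \<Rightarrow> 0)"

definition cre :: "complex^'d \<Rightarrow> 'd fock \<Rightarrow> 'd fock" where
  "cre \<xi> x w = (case w of [] \<Rightarrow> 0 | i # w' \<Rightarrow> \<xi>$i * x w')"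

text \<open>Its adjoint l(xi) = l*(xi)^* w.r.t. the q-inner product:
  eta1..etan |-> sum_k q^(k-1) <xi, eta_k>_U eta1..(omit k)..etan.\<close>
definition ann :: "real \<Rightarrow> complex^'d^'d \<Rightarrow> complex^'d \<Rightarrow> 'd fock \<Rightarrow> 'd fock" where
  "ann q A \<xi> x v = (\<Sum>k\<le>length v. \<Sum>i\<in>UNIV.
       complex_of_real (q ^ k) * innerU A \<xi> (axis i 1) * x (take k v @ i # drop k v))"

definition sop :: "real \<Rightarrow> complex^'d^'d \<Rightarrow> complex^'d \<Rightarrow> 'd fock \<Rightarrow> 'd fock" where
  "sop q A h x w = cre h x w + ann q A h x w"

text \<open>W(xi) for xi in H: W(xi) = s(Re xi) + i s(Im xi) (the element of M with W(xi) Omega = xi),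
  acting on the algebraic Fock space; and its adjoint W(xi)^* = s(Re xi) - i s(Im xi).\<close>
definition Wop :: "real \<Rightarrow> complex^'d^'d \<Rightarrow> complex^'d \<Rightarrow> 'd fock \<Rightarrow> 'd fock" where
  "Wop q A \<xi> x w = sop q A (rev_part \<xi>) x w + \<i> * sop q A (imv \<xi>) x w"

definition Wadj :: "real \<Rightarrow> complex^'d^'d \<Rightarrow> complex^'d \<Rightarrow> 'd fock \<Rightarrow> 'd fock" where
  "Wadj q A \<xi> x w = sop q A (rev_part \<xi>) x w - \<i> * sop q A (imv \<xi>) x w"

text \<open>D i is an operator with domain F_alg into the completion F_q(H_U); a vector v of
  F_q(H_U) is represented (Riesz) by the bounded antilinear functional eta |-> <eta, v>_q on
  the dense subspace F_alg.  So  D i xi eta = <eta, D_i xi>_q.\<close>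
definition dual_system ::
  "real \<Rightarrow> complex^'d^'d \<Rightarrow> ('d \<Rightarrow> complex^'d) \<Rightarrow> ('d \<Rightarrow> 'd fock \<Rightarrow> 'd fock \<Rightarrow> complex) \<Rightarrow> bool" where
  "dual_system q A e D \<longleftrightarrow>
    (\<forall>i.
      \<comment> \<open>D_i xi is a vector of F_q: bounded antilinear functional on F_alg\<close>
      (\<forall>\<xi>. falg \<xi> \<longrightarrow>
          (\<forall>a b \<eta> \<eta>'. falg \<eta> \<longrightarrow> falg \<eta>' \<longrightarrow>
              D i \<xi> (\<lambda>w. a * \<eta> w + b * \<eta>' w) = cnj a * D i \<xi> \<eta> + cnj b * D i \<xi> \<eta>') \<and>
          (\<exists>C. \<forall>\<eta>. falg \<eta> \<longrightarrow> cmod (D i \<xi> \<eta>) \<le> C * qnorm q A \<eta>)) \<and>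
      \<comment> \<open>D_i is linear on its domain F_alg\<close>
      (\<forall>a b \<xi> \<xi>' \<eta>. falg \<xi> \<longrightarrow> falg \<xi>' \<longrightarrow> falg \<eta> \<longrightarrow>
          D i (\<lambda>w. a * \<xi> w + b * \<xi>' w) \<eta> = a * D i \<xi> \<eta> + b * D i \<xi>' \<eta>) \<and>
      \<comment> \<open>Omega in the domain of D_i^*\<close>
      (\<exists>C. \<forall>\<xi>. falg \<xi> \<longrightarrow> cmod (D i \<xi> vac) \<le> C * qnorm q A \<xi>) \<and>
      \<comment> \<open>D_i Omega = 0\<close>
      (\<forall>\<eta>. falg \<eta> \<longrightarrow> D i vac \<eta> = 0) \<and>
      \<comment> \<open>[D_i, A_j] = <conj e_j, e_i>_U P_Omega on F_alg, A_j = W(e_j)\<close>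
      (\<forall>j \<xi> \<eta>. falg \<xi> \<longrightarrow> falg \<eta> \<longrightarrow>
          D i (Wop q A (e j) \<xi>) \<eta> - D i \<xi> (Wadj q A (e j) \<eta>)
            = innerU A (conjv (e j)) (e i) * qip q A \<eta> vac * qip q A vac \<xi>))"

definition clin_indep :: "('d \<Rightarrow> complex^'d) \<Rightarrow> bool" where
  "clin_indep e \<longleftrightarrow> (\<forall>c :: 'd \<Rightarrow> complex. (\<Sum>k\<in>UNIV. c k *s e k) = 0 \<longrightarrow> (\<forall>k. c k = 0))"

end

theory Submission
  imports Defs
begin

lemma span_of_indep:
  fixes f :: "'d \<Rightarrow> complex^'d"
  assumes "clin_indep f"
  shows "\<exists>z. \<forall>j. g j = (\<Sum>k\<in>UNIV. z j k *s f k)"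
proof -
  have injf: "inj f"
  proof (rule injI, rule ccontr)
    fix a b assume ab: "f a = f b" "a \<noteq> b"
    define c where "c = (\<lambda>k. if k = a then 1 else if k = b then -1 else (0::complex))"
    have s1: "(\<Sum>k\<in>UNIV. c k *s f k) = c a *s f a + (\<Sum>k\<in>UNIV-{a}. c k *s f k)"
      by (rule sum.remove) auto
    have s2: "(\<Sum>k\<in>UNIV-{a}. c k *s f k) = c b *s f b + (\<Sum>k\<in>UNIV-{a}-{b}. c k *s f k)"
      by (rule sum.remove) (use ab in auto)
    have s3: "(\<Sum>k\<in>UNIV-{a}-{b}. c k *s f k) = 0"
      by (rule sum.neutral) (auto simp: c_def)
    have "(\<Sum>k\<in>UNIV. c k *s f k) = 0" unfolding s1 s2 s3 using ab by (simp add: c_def)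
    then have "c a = 0" using assms unfolding clin_indep_def by blast
    then show False by (simp add: c_def)
  qed
  have ind: "vec.independent (range f)"
    unfolding vec.independent_explicit
  proof (intro conjI allI impI ballI)
    fix c :: "complex^'d \<Rightarrow> complex" and v assume h: "(\<Sum>v\<in>range f. c v *s v) = 0" "v \<in> range f"
    have s: "(\<Sum>k\<in>UNIV. c (f k) *s f k) = 0" using h(1) by (simp add: sum.reindex[OF injf])
    obtain k where k: "v = f k" using h(2) by blast
    have "c (f k) = 0" using assms[unfolded clin_indep_def, rule_format, of "\<lambda>k. c (f k)"] s by simp
    then show "c v = 0" using k by simp
  qed simp
  have "UNIV \<subseteq> vec.span (range f)"
    apply (rule vec.card_ge_dim_independent[OF _ ind])
    by (simp_all add: card_image[OF injf] card_cart_basis)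
  then have "\<forall>j. \<exists>u. g j = (\<Sum>v\<in>range f. u v *s v)"
    unfolding vec.span_finite[OF finite_imageI[OF finite]] by blast
  then obtain u where u: "\<And>j. g j = (\<Sum>v\<in>range f. u j v *s v)" by metis
  have "\<forall>j. g j = (\<Sum>k\<in>UNIV. u j (f k) *s f k)"
    using u by (simp add: sum.reindex[OF injf])
  then show ?thesis by (rule exI[of _ "\<lambda>j k. u j (f k)"])
qed

lemma axis_comp: "(axis a (1::complex)) $ i = (if i = a then 1 else 0)"
  by (simp add: axis_def)

lemma delta_mult[simp]: "(if P then (1::complex) else 0) * z = (if P then z else 0)"
  "z * (if P then (1::complex) else 0) = (if P then z else 0)"
  "cnj (if P then (1::complex) else 0) = (if P then 1 else 0)"
  "z * (if P then y else (0::complex)) = (if P then z * y else 0)"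
  by auto

lemma cre_expand: "cre h x w = (\<Sum>a\<in>UNIV. h$a * cre (axis a 1) x w)"
proof (cases w)
  case Nil then show ?thesis by (simp add: cre_def)
next
  case (Cons i w') then show ?thesis
    by (simp add: cre_def axis_comp )
qed

lemma innerU_expand1: "innerU A h y = (\<Sum>a\<in>UNIV. cnj (h$a) * innerU A (axis a 1) y)"
  by (simp add: innerU_def cinner_def axis_comp )

lemma innerU_expand2: "innerU A h y = (\<Sum>b\<in>UNIV. y$b * innerU A h (axis b 1))"
proof -
  have "innerU A h y = (\<Sum>k\<in>UNIV. \<Sum>b\<in>UNIV. cnj (h$k) * ((A ** minv (mat 1 + A))$k$b * (2 * y$b)))"
    by (simp add: innerU_def cinner_def matrix_vector_mult_def sum_distrib_left)
  also have "\<dots> = (\<Sum>b\<in>UNIV. \<Sum>k\<in>UNIV. cnj (h$k) * ((A ** minv (mat 1 + A))$k$b * (2 * y$b)))"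
    by (rule sum.swap)
  also have "\<dots> = (\<Sum>b\<in>UNIV. y$b * innerU A h (axis b 1))"
    by (simp add: innerU_def cinner_def matrix_vector_mult_def sum_distrib_left axis_comp if_distrib mult_ac cong: if_cong)
  finally show ?thesis .
qed

lemma ann_expand: "ann q A h x v = (\<Sum>a\<in>UNIV. cnj (h$a) * ann q A (axis a 1) x v)"
proof -
  have "ann q A h x v = (\<Sum>k\<le>length v. \<Sum>i\<in>UNIV. \<Sum>a\<in>UNIV. cnj (h$a) * (complex_of_real (q ^ k) * innerU A (axis a 1) (axis i 1) * x (take k v @ i # drop k v)))"
    unfolding ann_def by (subst innerU_expand1) (simp add: sum_distrib_left sum_distrib_left sum_distrib_right mult_ac)
  also have "\<dots> = (\<Sum>k\<le>length v. \<Sum>a\<in>UNIV. \<Sum>i\<in>UNIV. cnj (h$a) * (complex_of_real (q ^ k) * innerU A (axis a 1) (axis i 1) * x (take k v @ i # drop k v)))"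
    by (rule sum.cong[OF refl], rule sum.swap)
  also have "\<dots> = (\<Sum>a\<in>UNIV. \<Sum>k\<le>length v. \<Sum>i\<in>UNIV. cnj (h$a) * (complex_of_real (q ^ k) * innerU A (axis a 1) (axis i 1) * x (take k v @ i # drop k v)))"
    by (rule sum.swap)
  also have "\<dots> = (\<Sum>a\<in>UNIV. cnj (h$a) * ann q A (axis a 1) x v)"
    unfolding ann_def by (simp add: sum_distrib_left)
  finally show ?thesis .
qed

lemma sop_expand: "sop q A h x w = (\<Sum>a\<in>UNIV. h$a * cre (axis a 1) x w + cnj (h$a) * ann q A (axis a 1) x w)"
  unfolding sop_def sum.distrib by (subst cre_expand, subst ann_expand, rule refl)

lemma rev_axis: "rev_part (axis a 1) = axis a (1::complex)"
  by (simp add: rev_part_def vec_eq_iff axis_comp)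
lemma imv_axis: "imv (axis a 1) = (0::complex^'d)"
  by (simp add: imv_def vec_eq_iff axis_comp)

lemma sop_zero: "sop q A 0 x w = 0"
  by (simp add: sop_def cre_def ann_def innerU_def cinner_def split: list.split)

lemma sop_axis: "sop q A (axis a 1) x w = cre (axis a 1) x w + ann q A (axis a 1) x w"
  by (simp add: sop_def)

lemma Wop_expand: "Wop q A \<xi> x w = (\<Sum>a\<in>UNIV. \<xi>$a * sop q A (axis a 1) x w)"
proof -
  have "Wop q A \<xi> x w = (\<Sum>a\<in>UNIV. (complex_of_real (Re (\<xi>$a)) + \<i> * complex_of_real (Im (\<xi>$a))) * (cre (axis a 1) x w + ann q A (axis a 1) x w))"
    unfolding Wop_def sop_expand
    by (simp add: rev_part_def imv_def sum_distrib_left sum.distrib[symmetric] algebra_simps)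
  also have "\<dots> = (\<Sum>a\<in>UNIV. \<xi>$a * sop q A (axis a 1) x w)"
    by (simp add: sop_axis complex_eq[symmetric])
  finally show ?thesis .
qed

lemma Wadj_expand: "Wadj q A \<xi> x w = (\<Sum>a\<in>UNIV. cnj (\<xi>$a) * sop q A (axis a 1) x w)"
proof -
  have "Wadj q A \<xi> x w = (\<Sum>a\<in>UNIV. (complex_of_real (Re (\<xi>$a)) - \<i> * complex_of_real (Im (\<xi>$a))) * (cre (axis a 1) x w + ann q A (axis a 1) x w))"
    unfolding Wadj_def sop_expand
    by (simp add: rev_part_def imv_def sum_distrib_left sum.distrib[symmetric] sum_subtractf[symmetric] algebra_simps)
  also have "\<dots> = (\<Sum>a\<in>UNIV. cnj (\<xi>$a) * sop q A (axis a 1) x w)"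
    by (rule sum.cong[OF refl]) (simp add: sop_axis complex_eq_iff)
  finally show ?thesis .
qed

lemma Wop_lin: "Wop q A (\<Sum>l\<in>UNIV. c l *s g l) \<xi> w = (\<Sum>l\<in>UNIV. c l * Wop q A (g l) \<xi> w)"
proof -
  have "Wop q A (\<Sum>l\<in>UNIV. c l *s g l) \<xi> w = (\<Sum>a\<in>UNIV. \<Sum>l\<in>UNIV. c l * (g l $ a * sop q A (axis a 1) \<xi> w))"
    by (simp add: Wop_expand sum_distrib_left sum_distrib_right mult_ac)
  also have "\<dots> = (\<Sum>l\<in>UNIV. \<Sum>a\<in>UNIV. c l * (g l $ a * sop q A (axis a 1) \<xi> w))"
    by (rule sum.swap)
  also have "\<dots> = (\<Sum>l\<in>UNIV. c l * Wop q A (g l) \<xi> w)"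
    by (simp add: Wop_expand sum_distrib_left)
  finally show ?thesis .
qed

lemma Wadj_lin: "Wadj q A (\<Sum>l\<in>UNIV. c l *s g l) \<xi> w = (\<Sum>l\<in>UNIV. cnj (c l) * Wadj q A (g l) \<xi> w)"
proof -
  have "Wadj q A (\<Sum>l\<in>UNIV. c l *s g l) \<xi> w = (\<Sum>a\<in>UNIV. \<Sum>l\<in>UNIV. cnj (c l) * (cnj (g l $ a) * sop q A (axis a 1) \<xi> w))"
    by (simp add: Wadj_expand sum_distrib_left sum_distrib_right mult_ac)
  also have "\<dots> = (\<Sum>l\<in>UNIV. \<Sum>a\<in>UNIV. cnj (c l) * (cnj (g l $ a) * sop q A (axis a 1) \<xi> w))"
    by (rule sum.swap)
  also have "\<dots> = (\<Sum>l\<in>UNIV. cnj (c l) * Wadj q A (g l) \<xi> w)"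
    by (simp add: Wadj_expand sum_distrib_left)
  finally show ?thesis .
qed

lemma innerU_lin1: "innerU A (\<Sum>l\<in>UNIV. c l *s g l) y = (\<Sum>l\<in>UNIV. cnj (c l) * innerU A (g l) y)"
proof -
  have "innerU A (\<Sum>l\<in>UNIV. c l *s g l) y = (\<Sum>a\<in>UNIV. \<Sum>l\<in>UNIV. cnj (c l) * (cnj (g l $ a) * innerU A (axis a 1) y))"
    by (subst innerU_expand1) (simp add: sum_distrib_left sum_distrib_right mult_ac)
  also have "\<dots> = (\<Sum>l\<in>UNIV. \<Sum>a\<in>UNIV. cnj (c l) * (cnj (g l $ a) * innerU A (axis a 1) y))"
    by (rule sum.swap)
  also have "\<dots> = (\<Sum>l\<in>UNIV. cnj (c l) * innerU A (g l) y)"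
    by (subst (2) innerU_expand1) (simp add: sum_distrib_left)
  finally show ?thesis .
qed

lemma innerU_lin2: "innerU A h (\<Sum>l\<in>UNIV. c l *s g l) = (\<Sum>l\<in>UNIV. c l * innerU A h (g l))"
proof -
  have "innerU A h (\<Sum>l\<in>UNIV. c l *s g l) = (\<Sum>a\<in>UNIV. \<Sum>l\<in>UNIV. c l * (g l $ a * innerU A h (axis a 1)))"
    by (subst innerU_expand2) (simp add: sum_distrib_left sum_distrib_right mult_ac)
  also have "\<dots> = (\<Sum>l\<in>UNIV. \<Sum>a\<in>UNIV. c l * (g l $ a * innerU A h (axis a 1)))"
    by (rule sum.swap)
  also have "\<dots> = (\<Sum>l\<in>UNIV. c l * innerU A h (g l))"
    by (subst (2) innerU_expand2) (simp add: sum_distrib_left)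
  finally show ?thesis .
qed

lemma conjv_lin: "conjv (\<Sum>l\<in>UNIV. c l *s g l) = (\<Sum>l\<in>UNIV. cnj (c l) *s conjv (g l))"
  by (simp add: conjv_def vec_eq_iff)

lemma falg_lin: "falg \<xi> \<Longrightarrow> falg \<xi>' \<Longrightarrow> falg (\<lambda>w. a * \<xi> w + b * \<xi>' w)"
  unfolding falg_def
  by (rule finite_subset[of _ "{w. \<xi> w \<noteq> 0} \<union> {w. \<xi>' w \<noteq> 0}"]) auto

lemma falg_vac: "falg vac"
  unfolding falg_def vac_def by (rule finite_subset[of _ "{[]}"]) auto

lemma falg_sum: "finite L \<Longrightarrow> (\<And>l. l \<in> L \<Longrightarrow> falg (g l)) \<Longrightarrow> falg (\<lambda>w. \<Sum>l\<in>L. c l * g l w)"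
proof (induction L rule: finite_induct)
  case empty
  then show ?case by (simp add: falg_def)
next
  case (insert x F)
  have "falg (\<lambda>w. c x * g x w + 1 * (\<Sum>l\<in>F. c l * g l w))"
    using insert by (intro falg_lin) auto
  then show ?case using insert by simp
qed

lemma falg_cre: "falg x \<Longrightarrow> falg (cre h x)"
  unfolding falg_def
proof (rule finite_subset[of _ "(\<lambda>(i,w). i # w) ` (UNIV \<times> {w. x w \<noteq> 0})"])
  show "{w. cre h x w \<noteq> 0} \<subseteq> (\<lambda>(i,w). i # w) ` (UNIV \<times> {w. x w \<noteq> 0})"
  proof
    fix w assume "w \<in> {w. cre h x w \<noteq> 0}"
    then obtain i w' where "w = i # w'" "x w' \<noteq> 0" by (cases w) (auto simp: cre_def)
    then show "w \<in> (\<lambda>(i,w). i # w) ` (UNIV \<times> {w. x w \<noteq> 0})" by force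
  qed
qed auto

lemma falg_ann: "falg x \<Longrightarrow> falg (ann q A h x)"
  unfolding falg_def
proof (rule finite_subset[of _ "\<Union>u\<in>{w. x w \<noteq> 0}. (\<lambda>k. take k u @ drop (Suc k) u) ` {..length u}"])
  show "{w. ann q A h x w \<noteq> 0} \<subseteq> (\<Union>u\<in>{w. x w \<noteq> 0}. (\<lambda>k. take k u @ drop (Suc k) u) ` {..length u})"
  proof
    fix v assume "v \<in> {w. ann q A h x w \<noteq> 0}"
    then have "(\<Sum>k\<le>length v. \<Sum>i\<in>UNIV.
       complex_of_real (q ^ k) * innerU A h (axis i 1) * x (take k v @ i # drop k v)) \<noteq> 0"
      unfolding ann_def by simp
    then obtain k where k: "k \<le> length v" and "(\<Sum>i\<in>UNIV.
       complex_of_real (q ^ k) * innerU A h (axis i 1) * x (take k v @ i # drop k v)) \<noteq> 0"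
      by (meson sum.not_neutral_contains_not_neutral atMost_iff)
    then obtain i where "complex_of_real (q ^ k) * innerU A h (axis i 1) * x (take k v @ i # drop k v) \<noteq> 0"
      by (meson sum.not_neutral_contains_not_neutral)
    then have nz: "x (take k v @ i # drop k v) \<noteq> 0" by auto
    define u where "u = take k v @ i # drop k v"
    have "take k u = take k v" "drop (Suc k) u = drop k v" using k by (simp_all add: u_def)
    then have "v = take k u @ drop (Suc k) u" by simp
    moreover have "k \<le> length u" using k by (simp add: u_def)
    ultimately show "v \<in> (\<Union>u\<in>{w. x w \<noteq> 0}. (\<lambda>k. take k u @ drop (Suc k) u) ` {..length u})"
      using nz unfolding u_def[symmetric] by blast
  qed
qed auto

lemma falg_sop: "falg x \<Longrightarrow> falg (sop q A h x)"
proof -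
  assume x: "falg x"
  have "falg (\<lambda>w. 1 * cre h x w + 1 * ann q A h x w)"
    by (rule falg_lin[OF falg_cre[OF x] falg_ann[OF x]])
  then show ?thesis unfolding sop_def[abs_def] by simp
qed

lemma falg_Wop: "falg x \<Longrightarrow> falg (Wop q A h x)"
proof -
  assume x: "falg x"
  have "falg (\<lambda>w. 1 * sop q A (rev_part h) x w + \<i> * sop q A (imv h) x w)"
    by (rule falg_lin[OF falg_sop[OF x] falg_sop[OF x]])
  then show ?thesis unfolding Wop_def[abs_def] by simp
qed

lemma falg_Wadj: "falg x \<Longrightarrow> falg (Wadj q A h x)"
proof -
  assume x: "falg x"
  have "falg (\<lambda>w. 1 * sop q A (rev_part h) x w + (- \<i>) * sop q A (imv h) x w)"
    by (rule falg_lin[OF falg_sop[OF x] falg_sop[OF x]])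
  then show ?thesis unfolding Wadj_def[abs_def] by simp
qed

lemma ds_lin: "dual_system q A e D \<Longrightarrow> falg \<xi> \<Longrightarrow> falg \<xi>' \<Longrightarrow> falg \<eta> \<Longrightarrow>
   D i (\<lambda>w. a * \<xi> w + b * \<xi>' w) \<eta> = a * D i \<xi> \<eta> + b * D i \<xi>' \<eta>"
  unfolding dual_system_def by blast

lemma ds_anti: "dual_system q A e D \<Longrightarrow> falg \<xi> \<Longrightarrow> falg \<eta> \<Longrightarrow> falg \<eta>' \<Longrightarrow>
   D i \<xi> (\<lambda>w. a * \<eta> w + b * \<eta>' w) = cnj a * D i \<xi> \<eta> + cnj b * D i \<xi> \<eta>'"
  unfolding dual_system_def by blast

lemma ds_lin_sum:
  assumes ds: "dual_system q A e D" and fin: "finite L" and g: "\<And>l. l \<in> L \<Longrightarrow> falg (g l)" and eta: "falg \<eta>"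
  shows "D i (\<lambda>w. \<Sum>l\<in>L. c l * g l w) \<eta> = (\<Sum>l\<in>L. c l * D i (g l) \<eta>)"
  using fin g
proof (induction L rule: finite_induct)
  case empty
  have "D i (\<lambda>w. 0 * vac w + 0 * vac w) \<eta> = 0 * D i vac \<eta> + 0 * D i vac \<eta>"
    by (rule ds_lin[OF ds falg_vac falg_vac eta])
  then show ?case by simp
next
  case (insert x F)
  have fF: "falg (\<lambda>w. \<Sum>l\<in>F. c l * g l w)" using insert by (intro falg_sum) auto
  have "D i (\<lambda>w. c x * g x w + 1 * (\<Sum>l\<in>F. c l * g l w)) \<eta> = c x * D i (g x) \<eta> + 1 * D i (\<lambda>w. \<Sum>l\<in>F. c l * g l w) \<eta>"
    using insert by (intro ds_lin[OF ds _ fF eta]) auto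
  then show ?case using insert by simp
qed

lemma ds_anti_sum:
  assumes ds: "dual_system q A e D" and fin: "finite L" and g: "\<And>l. l \<in> L \<Longrightarrow> falg (g l)" and xi: "falg \<xi>"
  shows "D i \<xi> (\<lambda>w. \<Sum>l\<in>L. c l * g l w) = (\<Sum>l\<in>L. cnj (c l) * D i \<xi> (g l))"
  using fin g
proof (induction L rule: finite_induct)
  case empty
  have "D i \<xi> (\<lambda>w. 0 * vac w + 0 * vac w) = cnj 0 * D i \<xi> vac + cnj 0 * D i \<xi> vac"
    by (rule ds_anti[OF ds xi falg_vac falg_vac])
  then show ?case by simp
next
  case (insert x F)
  have fF: "falg (\<lambda>w. \<Sum>l\<in>F. c l * g l w)" using insert by (intro falg_sum) auto
  have "D i \<xi> (\<lambda>w. c x * g x w + 1 * (\<Sum>l\<in>F. c l * g l w)) = cnj (c x) * D i \<xi> (g x) + cnj 1 * D i \<xi> (\<lambda>w. \<Sum>l\<in>F. c l * g l w)"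
    using insert by (intro ds_anti[OF ds xi _ fF]) auto
  then show ?case using insert by simp
qed

lemma bound_sum:
  fixes y :: "'d \<Rightarrow> complex" and F :: "'d \<Rightarrow> complex" and C :: "'d \<Rightarrow> real"
  assumes "\<And>k. cmod (F k) \<le> C k * t"
  shows "cmod (\<Sum>k\<in>UNIV. y k * F k) \<le> (\<Sum>k\<in>UNIV. cmod (y k) * C k) * t"
proof -
  have "cmod (\<Sum>k\<in>UNIV. y k * F k) \<le> (\<Sum>k\<in>UNIV. cmod (y k * F k))" by (rule norm_sum)
  also have "\<dots> \<le> (\<Sum>k\<in>UNIV. cmod (y k) * (C k * t))"
    by (rule sum_mono) (simp add: norm_mult assms mult_left_mono)
  also have "\<dots> = (\<Sum>k\<in>UNIV. cmod (y k) * C k) * t" by (simp add: sum_distrib_left sum_distrib_right mult_ac)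
  finally show ?thesis .
qed

lemma ds_transform:
  assumes ds: "dual_system q A e D" and f: "\<And>j. f j = (\<Sum>k\<in>UNIV. y j k *s e k)"
  shows "dual_system q A f (\<lambda>i \<xi> \<eta>. \<Sum>k\<in>UNIV. y i k * D k \<xi> \<eta>)"
proof -
  have bndk: "\<And>k \<xi>. falg \<xi> \<Longrightarrow> \<exists>C. \<forall>\<eta>. falg \<eta> \<longrightarrow> cmod (D k \<xi> \<eta>) \<le> C * qnorm q A \<eta>"
    using ds unfolding dual_system_def by blast
  have omk: "\<And>k. \<exists>C. \<forall>\<xi>. falg \<xi> \<longrightarrow> cmod (D k \<xi> vac) \<le> C * qnorm q A \<xi>"
    using ds unfolding dual_system_def by blast
  have vack: "\<And>k \<eta>. falg \<eta> \<Longrightarrow> D k vac \<eta> = 0"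
    using ds unfolding dual_system_def by blast
  have commk: "\<And>k j \<xi> \<eta>. falg \<xi> \<Longrightarrow> falg \<eta> \<Longrightarrow>
      D k (Wop q A (e j) \<xi>) \<eta> - D k \<xi> (Wadj q A (e j) \<eta>)
        = innerU A (conjv (e j)) (e k) * qip q A \<eta> vac * qip q A vac \<xi>"
    using ds unfolding dual_system_def by blast
  define D' where "D' = (\<lambda>i \<xi> \<eta>. \<Sum>k\<in>UNIV. y i k * D k \<xi> \<eta>)"
  have P1: "D' i \<xi> (\<lambda>w. a * \<eta> w + b * \<eta>' w) = cnj a * D' i \<xi> \<eta> + cnj b * D' i \<xi> \<eta>'"
    if "falg \<xi>" "falg \<eta>" "falg \<eta>'" for i \<xi> a b \<eta> \<eta>'
    unfolding D'_def using that
    by (simp add: ds_anti[OF ds] sum.distrib sum_distrib_left algebra_simps)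
  have P2: "\<exists>C. \<forall>\<eta>. falg \<eta> \<longrightarrow> cmod (D' i \<xi> \<eta>) \<le> C * qnorm q A \<eta>" if xi0: "falg \<xi>" for i \<xi>
  proof -
    obtain C where C: "\<And>k \<eta>. falg \<eta> \<Longrightarrow> cmod (D k \<xi> \<eta>) \<le> C k * qnorm q A \<eta>"
      using bndk[OF xi0] by metis
    show ?thesis unfolding D'_def
      by (rule exI[of _ "\<Sum>k\<in>UNIV. cmod (y i k) * C k"], intro allI impI bound_sum C)
  qed
  have P3: "D' i (\<lambda>w. a * \<xi> w + b * \<xi>' w) \<eta> = a * D' i \<xi> \<eta> + b * D' i \<xi>' \<eta>"
    if "falg \<xi>" "falg \<xi>'" "falg \<eta>" for i \<xi> a b \<xi>' \<eta>
    unfolding D'_def using that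
    by (simp add: ds_lin[OF ds] sum.distrib sum_distrib_left algebra_simps)
  have P4: "\<exists>C. \<forall>\<xi>. falg \<xi> \<longrightarrow> cmod (D' i \<xi> vac) \<le> C * qnorm q A \<xi>" for i
  proof -
    obtain C where C: "\<And>k \<xi>. falg \<xi> \<Longrightarrow> cmod (D k \<xi> vac) \<le> C k * qnorm q A \<xi>"
      using omk by metis
    show ?thesis unfolding D'_def
      by (rule exI[of _ "\<Sum>k\<in>UNIV. cmod (y i k) * C k"], intro allI impI bound_sum C)
  qed
  have P5: "D' i vac \<eta> = 0" if "falg \<eta>" for i \<eta>
    unfolding D'_def using that by (simp add: vack)
  have P6: "D' i (Wop q A (f j) \<xi>) \<eta> - D' i \<xi> (Wadj q A (f j) \<eta>)
            = innerU A (conjv (f j)) (f i) * qip q A \<eta> vac * qip q A vac \<xi>"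
    if xi: "falg \<xi>" and eta: "falg \<eta>" for i j \<xi> \<eta>
  proof -
    define P where "P = qip q A \<eta> vac * qip q A vac \<xi>"
    have W1: "Wop q A (f j) \<xi> = (\<lambda>w. \<Sum>l\<in>UNIV. y j l * Wop q A (e l) \<xi> w)"
      by (rule ext) (simp add: f Wop_lin)
    have W2: "Wadj q A (f j) \<eta> = (\<lambda>w. \<Sum>l\<in>UNIV. cnj (y j l) * Wadj q A (e l) \<eta> w)"
      by (rule ext) (simp add: f Wadj_lin)
    have "D' i (Wop q A (f j) \<xi>) \<eta> - D' i \<xi> (Wadj q A (f j) \<eta>)
       = (\<Sum>k\<in>UNIV. y i k * (\<Sum>l\<in>UNIV. y j l * D k (Wop q A (e l) \<xi>) \<eta>))
         - (\<Sum>k\<in>UNIV. y i k * (\<Sum>l\<in>UNIV. y j l * D k \<xi> (Wadj q A (e l) \<eta>)))"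
      unfolding D'_def W1 W2
      by (simp add: ds_lin_sum[OF ds _ _ eta] ds_anti_sum[OF ds _ _ xi] falg_Wop falg_Wadj xi eta)
    also have "\<dots> = (\<Sum>k\<in>UNIV. y i k * (\<Sum>l\<in>UNIV. y j l *
           (D k (Wop q A (e l) \<xi>) \<eta> - D k \<xi> (Wadj q A (e l) \<eta>))))"
      by (simp add: sum_subtractf[symmetric] right_diff_distrib[symmetric])
    also have "\<dots> = (\<Sum>k\<in>UNIV. y i k * (\<Sum>l\<in>UNIV. y j l * (innerU A (conjv (e l)) (e k) * P)))"
      by (simp add: commk xi eta P_def mult.assoc)
    also have "\<dots> = (\<Sum>k\<in>UNIV. \<Sum>l\<in>UNIV. y j l * (y i k * innerU A (conjv (e l)) (e k))) * P"
      by (simp add: sum_distrib_left sum_distrib_right mult_ac)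
    also have "\<dots> = innerU A (conjv (f j)) (f i) * P"
      by (simp add: f conjv_lin innerU_lin1 innerU_lin2 sum_distrib_left mult_ac)
    finally show ?thesis unfolding P_def by (simp add: mult.assoc)
  qed
  show ?thesis
    unfolding D'_def[symmetric] dual_system_def
    apply (intro allI conjI impI)
         apply (rule P1; assumption)
        apply (rule P2; assumption)
       apply (rule P3; assumption)
      apply (rule P4)
     apply (rule P5; assumption)
    apply (rule P6; assumption)
    done
qed


theorem lemma1p2:
  fixes q :: real
    and U :: "real \<Rightarrow> real^'d \<Rightarrow> real^'d"
    and A :: "complex^'d^'d"
    and e f :: "'d \<Rightarrow> complex^'d"
    and x :: "'d \<Rightarrow> 'd \<Rightarrow> complex"
  assumes "-1 < q" and "q < 1"
    and "orth_group U"
    and "is_generator U A"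
    and "clin_indep e" and "clin_indep f"
    and "\<And>j. f j = (\<Sum>k\<in>UNIV. x j k *s e k)"
  shows "(\<exists>D. dual_system q A e D) \<longleftrightarrow> (\<exists>D. dual_system q A f D)"
proof
  assume "\<exists>D. dual_system q A e D"
  then obtain D where "dual_system q A e D" by blast
  then show "\<exists>D. dual_system q A f D" using ds_transform assms(7) by blast
next
  assume "\<exists>D. dual_system q A f D"
  then obtain D where D: "dual_system q A f D" by blast
  obtain z where z: "\<forall>j. e j = (\<Sum>k\<in>UNIV. z j k *s f k)"
    using span_of_indep[OF assms(6)] by blast
  show "\<exists>D. dual_system q A e D" using ds_transform[OF D] z by blast
qed

end
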